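(* Let $d\ge 1$ and $N\ge 1$, and let $\mathbf{a}_1,\dots,\mathbf{a}_N\in s'(\mathbb{Z}^d)$. Then the following are equivalent: (1) There exist $\mathbf{b}_1,\dots,\mathbf{b}_N\in s'(\mathbb{Z}^d)$ such that $\mathbf{b}_1\mathbf{a}_1+\cdots+\mathbf{b}_N\mathbf{a}_N=1$ (the constant function $1$ on $\mathbb{Z}^d$, products taken pointwise). (2) There exist $\delta>0$ and $K\in\mathbb{N}$ such that for all $\mathbf{n}\in\mathbb{Z}^d$, $$|\mathbf{a}_1(\mathbf{n})|+\cdots+|\mathbf{a}_N(\mathbf{n})|\ge \delta\,(1+\|\mathbf{n}\|_1)^{-K}.$$
   Context: For $\mathbf{n}\in\mathbb{Z}^d$, $\|\mathbf{n}\|_1$ denotes the $1$-norm. $s'(\mathbb{Z}^d)$ is the set of all maps $\mathbf{a}:\mathbb{Z}^d\to\mathbb{C}$ of at most polynomial growth, i.e. for which there exist $M>0$ and $k\in\mathbb{N}$ with $|\mathbf{a}(\mathbf{n})|\le M(1+\|\mathbf{n}\|_1)^k$ for all $\mathbf{n}\in\mathbb{Z}^d$. It is a commutative unital ring under pointwise addition and multiplication, with unit the constant function $1$. *)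

theory Defs
  imports "HOL-Analysis.Analysis"
begin

text \<open>Points of Z^d are modelled as int ^ 'd with 'd a finite (nonempty) index type, d = CARD('d).\<close>

definition norm1 :: "int ^ 'd::finite \<Rightarrow> int" where
  "norm1 n = (\<Sum>i\<in>UNIV. \<bar>n $ i\<bar>)"

definition slow_growth :: "(int ^ 'd::finite \<Rightarrow> complex) set" where
  "slow_growth = {a. \<exists>M>0. \<exists>k::nat. \<forall>n. cmod (a n) \<le> M * (1 + real_of_int (norm1 n)) ^ k}"

end

theory Submission
  imports Defs
begin

lemma norm1_w: "1 \<le> 1 + real_of_int (norm1 (n::int^'d::finite))"
  unfolding norm1_def by (simp add: sum_nonneg)

theorem theorem1p1:
  fixes a :: "nat \<Rightarrow> (int ^ 'd::finite \<Rightarrow> complex)" and N :: nat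
  assumes "N \<ge> 1"
    and "\<forall>j<N. a j \<in> slow_growth"
  shows "(\<exists>b :: nat \<Rightarrow> (int ^ 'd \<Rightarrow> complex).
            (\<forall>j<N. b j \<in> slow_growth) \<and> (\<forall>n. (\<Sum>j<N. b j n * a j n) = 1))
     \<longleftrightarrow> (\<exists>\<delta>>0. \<exists>K::nat. \<forall>n. (\<Sum>j<N. cmod (a j n)) \<ge> \<delta> * (1 + real_of_int (norm1 n)) powi (- int K))"
proof
  define w where "w n = 1 + real_of_int (norm1 n)" for n :: "int^'d"
  have w1: "1 \<le> w n" for n unfolding w_def by (rule norm1_w)
  assume "\<exists>b :: nat \<Rightarrow> (int ^ 'd \<Rightarrow> complex).
            (\<forall>j<N. b j \<in> slow_growth) \<and> (\<forall>n. (\<Sum>j<N. b j n * a j n) = 1)"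
  then obtain b where bs: "\<forall>j<N. b j \<in> slow_growth" and bsum: "\<forall>n. (\<Sum>j<N. b j n * a j n) = 1"
    by blast
  have "\<forall>j. \<exists>Mk. j < N \<longrightarrow> fst Mk > 0 \<and> (\<forall>n. cmod (b j n) \<le> fst Mk * w n ^ snd Mk)"
    using bs unfolding slow_growth_def w_def by fastforce
  then obtain Mk where Mk: "\<And>j. j < N \<Longrightarrow> fst (Mk j) > 0 \<and> (\<forall>n. cmod (b j n) \<le> fst (Mk j) * w n ^ snd (Mk j))"
    by metis
  define M where "M = (\<Sum>j<N. fst (Mk j))"
  define k where "k = (\<Sum>j<N. snd (Mk j))"
  have Mpos: "M > 0" unfolding M_def
    using assms(1) Mk by (intro sum_pos) (auto simp: lessThan_empty_iff)
  have bb: "cmod (b j n) \<le> M * w n ^ k" if j: "j < N" for j n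
  proof -
    have "cmod (b j n) \<le> fst (Mk j) * w n ^ snd (Mk j)" using Mk j by blast
    also have "\<dots> \<le> M * w n ^ k"
    proof (rule mult_mono)
      show "fst (Mk j) \<le> M" unfolding M_def using j Mk
        by (intro member_le_sum) (auto intro: less_imp_le)
      show "w n ^ snd (Mk j) \<le> w n ^ k" unfolding k_def using j w1
        by (intro power_increasing member_le_sum) auto
    qed (use Mpos w1[of n] in auto)
    finally show ?thesis .
  qed
  show "\<exists>\<delta>>0. \<exists>K::nat. \<forall>n. (\<Sum>j<N. cmod (a j n)) \<ge> \<delta> * (1 + real_of_int (norm1 n)) powi (- int K)"
  proof (intro exI conjI allI)
    show "inverse M > 0" using Mpos by simp
    fix n
    have wp: "w n ^ k > 0" using w1[of n] by simp
    have "1 = cmod (\<Sum>j<N. b j n * a j n)" using bsum by simp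
    also have "\<dots> \<le> (\<Sum>j<N. cmod (b j n) * cmod (a j n))"
      by (rule order_trans[OF norm_sum]) (simp add: norm_mult)
    also have "\<dots> \<le> (\<Sum>j<N. M * w n ^ k * cmod (a j n))"
      by (intro sum_mono mult_right_mono bb) auto
    also have "\<dots> = M * w n ^ k * (\<Sum>j<N. cmod (a j n))"
      by (simp add: sum_distrib_left)
    finally have "1 \<le> M * w n ^ k * (\<Sum>j<N. cmod (a j n))" .
    hence "inverse M * inverse (w n ^ k) \<le> (\<Sum>j<N. cmod (a j n))"
      using Mpos wp by (simp add: field_simps)
    thus "inverse M * (1 + real_of_int (norm1 n)) powi (- int k) \<le> (\<Sum>j<N. cmod (a j n))"
      by (simp add: power_int_minus w_def)
  qed
next
  define w where "w n = 1 + real_of_int (norm1 n)" for n :: "int^'d"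
  have w1: "1 \<le> w n" for n unfolding w_def by (rule norm1_w)
  assume "\<exists>\<delta>>0. \<exists>K::nat. \<forall>n. (\<Sum>j<N. cmod (a j n)) \<ge> \<delta> * (1 + real_of_int (norm1 n)) powi (- int K)"
  then obtain \<delta> K where dp: "\<delta> > 0" and
    dK: "\<And>n. (\<Sum>j<N. cmod (a j n)) \<ge> \<delta> * inverse (w n ^ K)"
    by (auto simp: power_int_minus w_def)
  define S where "S n = (\<Sum>j<N. cmod (a j n))" for n
  have Sp: "S n * w n ^ K \<ge> \<delta>" for n
  proof -
    have wp: "w n ^ K > 0" using w1[of n] by simp
    from dK[of n] wp show ?thesis unfolding S_def by (simp add: field_simps)
  qed
  have Spos: "S n > 0" for n
  proof -
    have "S n \<ge> 0" unfolding S_def by (simp add: sum_nonneg)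
    moreover have "S n \<noteq> 0" using Sp[of n] dp by auto
    ultimately show ?thesis by simp
  qed
  have invS: "inverse (S n) \<le> inverse \<delta> * w n ^ K" for n
    using Sp[of n] Spos[of n] dp by (simp add: field_simps)
  define b where "b j n = (if a j n = 0 then 0 else cnj (a j n) / complex_of_real (cmod (a j n) * S n))" for j n
  show "\<exists>b :: nat \<Rightarrow> (int ^ 'd \<Rightarrow> complex).
            (\<forall>j<N. b j \<in> slow_growth) \<and> (\<forall>n. (\<Sum>j<N. b j n * a j n) = 1)"
  proof (intro exI conjI allI impI)
    fix j assume "j < N"
    show "b j \<in> slow_growth" unfolding slow_growth_def
    proof (intro CollectI exI conjI allI)
      show "inverse \<delta> > 0" using dp by simp
      fix n
      have "cmod (b j n) \<le> inverse (S n)"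
        using Spos[of n] by (auto simp: b_def norm_divide norm_mult field_simps)
      also have "\<dots> \<le> inverse \<delta> * w n ^ K" by (rule invS)
      finally show "cmod (b j n) \<le> inverse \<delta> * (1 + real_of_int (norm1 n)) ^ K"
        by (simp add: w_def)
    qed
  next
    fix n
    have "b j n * a j n = complex_of_real (cmod (a j n) / S n)" for j
    proof (cases "a j n = 0")
      case False
      have "cnj (a j n) * a j n = complex_of_real (cmod (a j n) ^ 2)"
        using complex_norm_square[of "a j n"] by (simp add: mult.commute)
      thus ?thesis using False Spos[of n] unfolding b_def
        by (simp add: field_simps power2_eq_square)
    qed (simp add: b_def)
    hence "(\<Sum>j<N. b j n * a j n) = (\<Sum>j<N. complex_of_real (cmod (a j n) / S n))"
      by simp
    also have "\<dots> = complex_of_real (\<Sum>j<N. cmod (a j n) / S n)" by simp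
    also have "\<dots> = complex_of_real (S n / S n)"
      by (simp only: S_def sum_divide_distrib)
    finally have "(\<Sum>j<N. b j n * a j n) = complex_of_real (S n / S n)" .
    thus "(\<Sum>j<N. b j n * a j n) = 1" using Spos[of n] by simp
  qed
qed

end
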